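(* Let $k\ge 2$ and let $G=G_n\langle t_1,\ldots,t_k\rangle$ be a Toeplitz graph with $n\ge t_{k-1}+t_k$. Then the following are equivalent: (i) $G$ is an interval graph; (ii) $G$ is chordal; (iii) $t_i=it_1$ for every $i\in[k]$; (iv) $\omega(G)=k+1$.
   Context: For integers $n\ge 2$, $k\ge 1$ and $1\le t_1<t_2<\cdots<t_k\le n-1$, the Toeplitz graph $G_n\langle t_1,\ldots,t_k\rangle$ is the simple graph with vertex set $[n]=\{1,\ldots,n\}$ in which two distinct vertices $i,j$ are adjacent if and only if $|i-j|\in\{t_1,\ldots,t_k\}$. A hole is an induced (chordless) cycle of length at least $4$; a graph is chordal if it has no hole. A graph is an interval graph if one can assign to each vertex $v$ a real interval $I_v$ such that distinct $u,v$ are adjacent iff $I_u\cap I_v\neq\emptyset$. $\omega(G)$ is the clique number. *)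

theory Defs
  imports "HOL-Analysis.Analysis"
begin

text \<open>Toeplitz graph G_n<t_1,...,t_k>: vertex set {1..n}; i, j adjacent iff
  |i - j| is one of t_1, ..., t_k.  The sequence t is indexed by 1..k.\<close>
definition toeplitz_adj :: "nat \<Rightarrow> (nat \<Rightarrow> nat) \<Rightarrow> nat \<Rightarrow> nat \<Rightarrow> bool" where
  "toeplitz_adj k t i j \<longleftrightarrow> i \<noteq> j \<and> (\<exists>l\<in>{1..k}. nat \<bar>int i - int j\<bar> = t l)"

definition toeplitz_params :: "nat \<Rightarrow> nat \<Rightarrow> (nat \<Rightarrow> nat) \<Rightarrow> bool" where
  "toeplitz_params n k t \<longleftrightarrow> n \<ge> 2 \<and> k \<ge> 1 \<and> 1 \<le> t 1 \<and> t k \<le> n - 1 \<and>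
     (\<forall>i j. 1 \<le> i \<longrightarrow> i < j \<longrightarrow> j \<le> k \<longrightarrow> t i < t j)"

text \<open>A hole: an induced cycle of length at least 4, given as a list of
  distinct vertices where two of them are adjacent iff they are cyclically consecutive.\<close>
definition has_hole :: "'a set \<Rightarrow> ('a \<Rightarrow> 'a \<Rightarrow> bool) \<Rightarrow> bool" where
  "has_hole V E \<longleftrightarrow> (\<exists>cs. length cs \<ge> 4 \<and> distinct cs \<and> set cs \<subseteq> V \<and>
     (\<forall>i<length cs. \<forall>j<length cs. i \<noteq> j \<longrightarrow>
        (E (cs ! i) (cs ! j) \<longleftrightarrow> (j = (i + 1) mod length cs \<or> i = (j + 1) mod length cs))))"

definition chordal :: "'a set \<Rightarrow> ('a \<Rightarrow> 'a \<Rightarrow> bool) \<Rightarrow> bool" where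
  "chordal V E \<longleftrightarrow> \<not> has_hole V E"

definition interval_graph :: "'a set \<Rightarrow> ('a \<Rightarrow> 'a \<Rightarrow> bool) \<Rightarrow> bool" where
  "interval_graph V E \<longleftrightarrow> (\<exists>I :: 'a \<Rightarrow> real set.
     (\<forall>v\<in>V. is_interval (I v) \<and> I v \<noteq> {}) \<and>
     (\<forall>u\<in>V. \<forall>v\<in>V. u \<noteq> v \<longrightarrow> (E u v \<longleftrightarrow> I u \<inter> I v \<noteq> {})))"

definition is_clique :: "'a set \<Rightarrow> ('a \<Rightarrow> 'a \<Rightarrow> bool) \<Rightarrow> 'a set \<Rightarrow> bool" where
  "is_clique V E C \<longleftrightarrow> C \<subseteq> V \<and> (\<forall>u\<in>C. \<forall>v\<in>C. u \<noteq> v \<longrightarrow> E u v)"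

definition clique_number :: "'a set \<Rightarrow> ('a \<Rightarrow> 'a \<Rightarrow> bool) \<Rightarrow> nat" where
  "clique_number V E = Max (card ` {C. is_clique V E C})"

end

theory Submission
  imports Defs
begin

definition inT :: "nat \<Rightarrow> (nat \<Rightarrow> nat) \<Rightarrow> nat \<Rightarrow> bool" where
  "inT k t x \<longleftrightarrow> (\<exists>l\<in>{1..k}. t l = x)"

lemma natabs: "nat \<bar>int u - int v\<bar> = (if u \<le> v then v - u else u - v)"
  by auto

lemma adj_iff: "toeplitz_adj k t u v \<longleftrightarrow> u \<noteq> v \<and> inT k t (if u \<le> v then v - u else u - v)"
  unfolding toeplitz_adj_def inT_def natabs by metis

lemma tmono: "toeplitz_params n k t \<Longrightarrow> 1 \<le> i \<Longrightarrow> i < j \<Longrightarrow> j \<le> k \<Longrightarrow> t i < t j"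
  unfolding toeplitz_params_def by blast

lemma tless_iff:
  assumes "toeplitz_params n k t" "i \<in> {1..k}" "j \<in> {1..k}"
  shows "t i < t j \<longleftrightarrow> i < j"
  using tmono[OF assms(1)] assms(2,3) by (metis atLeastAtMost_iff linorder_neqE_nat order_less_asym)

lemma tle_iff:
  assumes "toeplitz_params n k t" "i \<in> {1..k}" "j \<in> {1..k}"
  shows "t i \<le> t j \<longleftrightarrow> i \<le> j"
  using tless_iff[OF assms(1) assms(3) assms(2)] by linarith

lemma gap:
  assumes "toeplitz_params n k t" "1 \<le> i" "i < k" "inT k t x" "t i < x" "x < t (Suc i)"
  shows False
proof -
  obtain l where l: "l \<in> {1..k}" "t l = x" using assms(4) unfolding inT_def by blast
  have "i < l" using tless_iff[OF assms(1), of i l] l assms by auto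
  moreover have "l < Suc i" using tless_iff[OF assms(1), of l "Suc i"] l assms by auto
  ultimately show False by simp
qed

lemma inT_ge: "toeplitz_params n k t \<Longrightarrow> inT k t x \<Longrightarrow> t 1 \<le> x"
  unfolding inT_def by (metis atLeastAtMost_iff tle_iff order_refl toeplitz_params_def)

lemma inT_le: "toeplitz_params n k t \<Longrightarrow> inT k t x \<Longrightarrow> x \<le> t k"
  unfolding inT_def by (metis atLeastAtMost_iff tle_iff order_refl toeplitz_params_def)

lemma inT_t: "i \<in> {1..k} \<Longrightarrow> inT k t (t i)"
  unfolding inT_def by blast

lemma t1pos: "toeplitz_params n k t \<Longrightarrow> t 1 \<ge> 1"
  unfolding toeplitz_params_def by simp

lemma inT_lt_top:
  assumes "toeplitz_params n k t" "k \<ge> 2" "inT k t x" "x < t k"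
  shows "x \<le> t (k - 1)"
proof (rule ccontr)
  assume "\<not> x \<le> t (k - 1)"
  moreover have "Suc (k-1) = k" "1 \<le> k - 1" "k - 1 < k" using assms(2) by auto
  ultimately show False using gap[OF assms(1), of "k-1" x] assms(3,4) by simp
qed

lemma all4: "(\<forall>i<(4::nat). P i) \<longleftrightarrow> P 0 \<and> P 1 \<and> P 2 \<and> P 3"
  by (auto simp: numeral_eq_Suc less_Suc_eq)

lemma c4_hole:
  assumes P: "toeplitz_params n k t" and p: "inT k t p" and q: "inT k t q" and pq: "p < q"
    and s: "\<not> inT k t (p + q)" and d: "\<not> inT k t (q - p)" and nn: "p + q + 1 \<le> n"
  shows "has_hole {1..n} (toeplitz_adj k t)"
proof -
  have p0: "p > 0" using inT_ge[OF P p] t1pos[OF P] by simp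
  define cs where "cs = [1, 1 + p, 1 + p + q, 1 + q]"
  have l4: "i < 4 \<longleftrightarrow> i = 0 \<or> i = 1 \<or> i = 2 \<or> i = (3::nat)" for i by auto
  show ?thesis unfolding has_hole_def
  proof (intro exI conjI)
    show "4 \<le> length cs" unfolding cs_def by simp
    show "distinct cs" unfolding cs_def using p0 pq by auto
    show "set cs \<subseteq> {1..n}" unfolding cs_def using nn pq by auto
    show "\<forall>i<length cs. \<forall>j<length cs. i \<noteq> j \<longrightarrow>
      (toeplitz_adj k t (cs ! i) (cs ! j) \<longleftrightarrow> (j = (i + 1) mod length cs \<or> i = (j + 1) mod length cs))"
    proof -
      have len: "length cs = 4" unfolding cs_def by simp
      show ?thesis unfolding len all4 unfolding cs_def using p q s d p0 pq
        by (auto simp: adj_iff add.commute)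
    qed
  qed
qed


lemma l_arith:
  assumes P: "toeplitz_params n k t" and k3: "k \<ge> 3"
    and PC: "\<And>p q. inT k t p \<Longrightarrow> inT k t q \<Longrightarrow> p < q \<Longrightarrow> p + q < t (k-1) + t k \<Longrightarrow>
               inT k t (q - p) \<or> inT k t (p + q)"
  shows "t k = t (k-1) + t 1 \<and> (k \<ge> 4 \<longrightarrow> (\<forall>i\<in>{1..k}. t i = i * t 1))"
proof -
  define a where "a = t 1"
  define N where "N = t (k-1)"
  define M where "M = t k"
  have a1: "a \<ge> 1" using t1pos[OF P] a_def by simp
  have aN: "a < N" unfolding a_def N_def using tmono[OF P, of 1 "k-1"] k3 by simp
  have NM: "N < M" unfolding M_def N_def using tmono[OF P, of "k-1" k] k3 by simp
  have iA: "inT k t a" "inT k t N" "inT k t M" unfolding a_def N_def M_def using k3 by (auto intro!: inT_t)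
  have geA: "inT k t x \<Longrightarrow> a \<le> x" for x using inT_ge[OF P] a_def by simp
  have leM: "inT k t x \<Longrightarrow> x \<le> M" for x using inT_le[OF P] M_def by simp
  have ltM: "inT k t x \<Longrightarrow> x < M \<Longrightarrow> x \<le> N" for x using inT_lt_top[OF P, of x] k3 M_def N_def by simp
  have F1: "inT k t (M - p)" if "inT k t p" "p < N" for p
  proof -
    have s1: "p < M" using that NM by linarith
    have s2: "p + M < t (k-1) + t k" using that NM unfolding M_def N_def by linarith
    have "inT k t (M - p) \<or> inT k t (p + M)" using PC[OF that(1) iA(3) s1 s2] .
    moreover have "\<not> inT k t (p + M)"
    proof
      assume "inT k t (p + M)"
      then have "p + M \<le> M" by (rule leM)
      then show False using geA[OF that(1)] a1 by linarith
    qed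
    ultimately show ?thesis by simp
  qed
  have F2: "inT k t (N - p) \<or> N + p = M" if "inT k t p" "p < N" for p
  proof -
    have s2: "p + N < t (k-1) + t k" using that NM unfolding M_def N_def by linarith
    have "inT k t (N - p) \<or> inT k t (p + N)" using PC[OF that(1) iA(2) that(2) s2] .
    moreover have "N + p = M" if "inT k t (p + N)"
    proof (rule ccontr)
      assume "N + p \<noteq> M"
      moreover have "p + N \<le> M" using leM[OF that] .
      ultimately have "p + N < M" by linarith
      then have "p + N \<le> N" using ltM[OF that] by blast
      then show False using geA[OF \<open>inT k t p\<close>] a1 by linarith
    qed
    ultimately show ?thesis by auto
  qed
  have sk: "Suc (k - 2) = k - 1" using k3 by simp
  have step0: "M = N + a"
  proof -
    have "inT k t (M - a)" using F1[OF iA(1) aN] .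
    then have "M - a \<le> N" using ltM[of "M - a"] a1 NM by simp
    then have le: "M \<le> N + a" by simp
    show ?thesis
    proof (rule ccontr)
      assume "M \<noteq> N + a"
      then have lt: "M < N + a" using le by simp
      define s where "s = t (k-2)"
      have sN: "s < N" unfolding s_def N_def using tmono[OF P, of "k-2" "k-1"] k3 by simp
      have iS: "inT k t s" unfolding s_def using k3 by (auto intro!: inT_t)
      have "N + s \<noteq> M" using geA[OF iS] lt by simp
      then have iR: "inT k t (N - s)" using F2[OF iS sN] by simp
      have rA: "N - s \<ge> a" using geA[OF iR] .
      have "inT k t (M - (N - s))" using F1[OF iR] sN a1 geA[OF iS] by simp
      moreover have "M - (N - s) = s + (M - N)" using sN NM by simp
      ultimately have i2: "inT k t (s + (M - N))" by simp
      have c1: "1 \<le> k - 2" "k - 2 < k" using k3 by auto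
      have e: "t (k-2) = s" "t (Suc (k-2)) = N" using sk s_def N_def by auto
      have c2: "t (k-2) < s + (M - N)" "s + (M - N) < t (Suc (k-2))"
        unfolding e using NM lt rA sN by linarith+
      show False using gap[OF P c1 i2 c2] .
    qed
  qed
  have part1: "t k = t (k-1) + t 1" using step0 unfolding M_def N_def a_def .
  have part2: "\<forall>i\<in>{1..k}. t i = i * t 1" if k4: "k \<ge> 4"
  proof -
    have F3: "inT k t (p + a)" if "inT k t p" "p < N" "p \<noteq> a" for p
    proof -
      have "N + p \<noteq> M" using step0 that(3) by simp
      then have iR: "inT k t (N - p)" using F2[OF that(1,2)] by simp
      have r0: "N - p < N" using geA[OF that(1)] a1 that(2) by linarith
      have "inT k t (M - (N - p))" using F1[OF iR r0] .
      moreover have "M - (N - p) = p + a" using step0 that(2) by simp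
      ultimately show ?thesis by simp
    qed
    have ta: "t j \<noteq> a" if "2 \<le> j" "j \<le> k" for j
      using tmono[OF P, of 1 j] that a_def by simp
    have tN: "t j < N" if "1 \<le> j" "j \<le> k - 2" for j
      using tmono[OF P, of j "k-1"] that k4 N_def by simp
    have base: "t (k-2) + a = N"
    proof -
      define s where "s = t (k-2)"
      have iS: "inT k t s" unfolding s_def using k4 by (auto intro!: inT_t)
      have sN: "s < N" unfolding s_def using tN[of "k-2"] k4 by simp
      have sa: "s \<noteq> a" unfolding s_def using ta[of "k-2"] k4 by simp
      have i1: "inT k t (s + a)" using F3[OF iS sN sa] .
      have "N + s \<noteq> M" using step0 sa by simp
      then have "inT k t (N - s)" using F2[OF iS sN] by simp
      then have "a \<le> N - s" by (rule geA)
      then have "s + a \<le> N" using sN by linarith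
      moreover have "\<not> s + a < N"
      proof
        assume h: "s + a < N"
        have c1: "1 \<le> k - 2" "k - 2 < k" using k4 by auto
        have e: "t (k-2) = s" "t (Suc (k-2)) = N" using sk s_def N_def by auto
        have c2: "t (k-2) < s + a" "s + a < t (Suc (k-2))" unfolding e using h a1 by linarith+
        show False using gap[OF P c1 i1 c2] .
      qed
      ultimately show ?thesis unfolding s_def by simp
    qed
    have down: "t j + a = t (Suc j)" if "2 \<le> j" "j \<le> k - 2" for j
      using that(2)
    proof (induction j rule: inc_induct)
      case base
      then show ?case using \<open>t (k-2) + a = N\<close> sk N_def by simp
    next
      case (step m)
      have m2: "2 \<le> m" using that(1) step(1) by simp
      have iS: "inT k t (t m)" using step k4 m2 by (auto intro!: inT_t)
      have i1: "inT k t (t m + a)"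
        using F3[OF iS tN[of m] ta[of m]] step m2 by simp
      have lt1: "t m < t (Suc m)" using tmono[OF P, of m "Suc m"] step m2 k4 by simp
      have c1: "1 \<le> m" "m < k" "1 \<le> Suc m" "Suc m < k" using step m2 k4 by auto
      have "\<not> t m + a < t (Suc m)"
      proof
        assume h: "t m + a < t (Suc m)"
        have "t m < t m + a" using a1 by linarith
        then show False using gap[OF P c1(1,2) i1 _ h] by blast
      qed
      moreover have "\<not> t m + a > t (Suc m)"
      proof
        assume h: "t m + a > t (Suc m)"
        have "t m + a < t (Suc (Suc m))" using step.IH lt1 by linarith
        then show False using gap[OF P c1(3,4) i1 h] by blast
      qed
      ultimately show ?case by simp
    qed
    have t2: "t 2 = 2 * a"
    proof -
      have iS: "inT k t (t (k-2))" using k4 by (auto intro!: inT_t)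
      have "inT k t (M - t (k-2))" using F1[OF iS tN[of "k-2"]] k4 by simp
      moreover have "M - t (k-2) = 2 * a" using base step0 by simp
      ultimately have i2: "inT k t (2 * a)" by simp
      have d2: "t 2 + a = t 3" using down[of 2] k4 by (simp add: numeral_3_eq_3)
      have t12: "a < t 2" using tmono[OF P, of 1 2] k4 a_def by simp
      have c1: "1 \<le> (1::nat)" "1 < k" "1 \<le> (2::nat)" "2 < k" using k4 by auto
      have "\<not> 2 * a < t 2"
      proof
        assume h: "2 * a < t 2"
        have l: "t 1 < 2 * a" using a1 a_def by simp
        have r: "2 * a < t (Suc 1)" using h by (simp add: numeral_2_eq_2)
        show False using gap[OF P c1(1,2) i2 l r] .
      qed
      moreover have "\<not> 2 * a > t 2"
      proof
        assume h: "2 * a > t 2"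
        have "2 * a < t (Suc 2)" using d2 t12 by (simp add: numeral_3_eq_3)
        then show False using gap[OF P c1(3,4) i2 h] by blast
      qed
      ultimately show ?thesis by simp
    qed
    have up: "1 \<le> i \<longrightarrow> i \<le> k \<longrightarrow> t i = i * a" for i
    proof (induction i)
      case 0 then show ?case by simp
    next
      case (Suc i)
      show ?case
      proof (intro impI)
        assume h: "1 \<le> Suc i" "Suc i \<le> k"
        consider "i = 0" | "i = 1" | "2 \<le> i" "i \<le> k - 2" | "i = k - 1" using h by linarith
        then show "t (Suc i) = Suc i * a"
        proof cases
          case 1 then show ?thesis using a_def by simp
        next
          case 2 then show ?thesis using t2 by (simp add: numeral_2_eq_2)
        next
          case 3 then show ?thesis using down[of i] Suc.IH by simp
        next
          case 4
          have e: "Suc i = k" using 4 k4 by simp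
          have e1: "t (Suc i) = t i + a" using part1 e 4 unfolding a_def by simp
          have e2: "t i = i * a" using Suc.IH 4 k4 by simp
          show ?thesis by (simp add: e1 e2)
        qed
      qed
    qed
    have "\<forall>i\<in>{1..k}. t i = i * a" using up by auto
    then show ?thesis unfolding a_def .
  qed
  show ?thesis using part1 part2 by blast
qed


lemma t_inj: "toeplitz_params n k t \<Longrightarrow> inj_on t {1..k}"
proof (rule inj_onI)
  fix x y assume P: "toeplitz_params n k t" and x: "x \<in> {1..k}" and y: "y \<in> {1..k}" and e: "t x = t y"
  show "x = y"
  proof (rule ccontr)
    assume "x \<noteq> y"
    then consider "x < y" | "y < x" by linarith
    then show False
    proof cases
      case 1 then show False using tless_iff[OF P x y] e by simp
    next
      case 2 then show False using tless_iff[OF P y x] e by simp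
    qed
  qed
qed

lemma card_T: "toeplitz_params n k t \<Longrightarrow> card (t ` {1..k}) = k"
  using t_inj by (simp add: card_image)

lemma clique_setup:
  assumes P: "toeplitz_params n k t" and C: "is_clique {1..n} (toeplitz_adj k t) C" and ne: "C \<noteq> {}"
  shows "finite C \<and> Min C \<in> C \<and> (\<lambda>v. v - Min C) ` (C - {Min C}) \<subseteq> t ` {1..k}
    \<and> inj_on (\<lambda>v. v - Min C) (C - {Min C}) \<and> card C = card (C - {Min C}) + 1"
proof -
  note Csub = C[unfolded is_clique_def, THEN conjunct1]
  have fin: "finite C" by (rule finite_subset[OF Csub]) simp
  define m where "m = Min C"
  have mC: "m \<in> C" unfolding m_def using fin ne by simp
  have mle: "m \<le> v" if "v \<in> C" for v unfolding m_def using fin that by simp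
  have sub: "(\<lambda>v. v - m) ` (C - {m}) \<subseteq> t ` {1..k}"
  proof
    fix x assume "x \<in> (\<lambda>v. v - m) ` (C - {m})"
    then obtain v where v: "v \<in> C" "v \<noteq> m" "x = v - m" by blast
    note all = C[unfolded is_clique_def, THEN conjunct2]
    have "toeplitz_adj k t m v" using all mC v(1,2) by metis
    then have "inT k t (v - m)" using mle[OF v(1)] v by (simp add: adj_iff)
    then obtain l where "l \<in> {1..k}" "t l = v - m" unfolding inT_def by blast
    then show "x \<in> t ` {1..k}" using v(3) by (metis image_eqI)
  qed
  have inj: "inj_on (\<lambda>v. v - m) (C - {m})"
  proof (rule inj_onI)
    fix x y assume x: "x \<in> C - {m}" and y: "y \<in> C - {m}" and e: "x - m = y - m"
    have "m \<le> x" "m \<le> y" using x y mle by auto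
    then show "x = y" using e by linarith
  qed
  have c1: "card (C - {m}) = card C - 1" using fin mC by (simp add: card_Diff_singleton)
  have c2: "card C > 0" using fin ne by (simp add: card_gt_0_iff)
  have cc: "card C = card (C - {m}) + 1" using c1 c2 by linarith
  show ?thesis unfolding m_def[symmetric] using fin mC sub inj cc by (intro conjI)
qed

lemma clique_parts:
  assumes P: "toeplitz_params n k t" and C: "is_clique {1..n} (toeplitz_adj k t) C" and ne: "C \<noteq> {}"
  shows "finite C" "Min C \<in> C" "(\<lambda>v. v - Min C) ` (C - {Min C}) \<subseteq> t ` {1..k}"
    "inj_on (\<lambda>v. v - Min C) (C - {Min C})" "card C = card (C - {Min C}) + 1"
    "card ((\<lambda>v. v - Min C) ` (C - {Min C})) = card (C - {Min C})"
proof -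
  note S = clique_setup[OF P C ne]
  show "finite C" using S[THEN conjunct1] .
  show "Min C \<in> C" using S[THEN conjunct2, THEN conjunct1] .
  show "(\<lambda>v. v - Min C) ` (C - {Min C}) \<subseteq> t ` {1..k}" using S[THEN conjunct2, THEN conjunct2, THEN conjunct1] .
  show inj: "inj_on (\<lambda>v. v - Min C) (C - {Min C})" using S[THEN conjunct2, THEN conjunct2, THEN conjunct2, THEN conjunct1] .
  show "card C = card (C - {Min C}) + 1" using S[THEN conjunct2, THEN conjunct2, THEN conjunct2, THEN conjunct2] .
  show "card ((\<lambda>v. v - Min C) ` (C - {Min C})) = card (C - {Min C})" using inj by (rule card_image)
qed

lemma clique_le:
  assumes P: "toeplitz_params n k t" and C: "is_clique {1..n} (toeplitz_adj k t) C"
  shows "card C \<le> k + 1"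
proof (cases "C = {}")
  case True then show ?thesis by simp
next
  case False
  note S = clique_parts[OF P C False]
  have "card ((\<lambda>v. v - Min C) ` (C - {Min C})) \<le> card (t ` {1..k})"
    by (rule card_mono[OF _ S(3)]) simp
  then show ?thesis using S(5,6) card_T[OF P] by linarith
qed

lemma clique_full_arith:
  assumes P: "toeplitz_params n k t" and C: "is_clique {1..n} (toeplitz_adj k t) C"
    and cd: "card C = k + 1"
  shows "\<forall>i\<in>{1..k}. t i = i * t 1"
proof -
  have ne: "C \<noteq> {}" using cd by auto
  note S = clique_parts[OF P C ne]
  define m where "m = Min C"
  define D where "D = (\<lambda>v. v - m) ` (C - {m})"
  have cD: "card D = k" unfolding D_def m_def using S(5,6) cd by linarith
  have eq: "D = t ` {1..k}"
    by (rule card_subset_eq) (use S(3) card_T[OF P] cD in \<open>auto simp: D_def m_def\<close>)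
  have inC: "m + t i \<in> C" if "i \<in> {1..k}" for i
  proof -
    have "t i \<in> D" using eq that by blast
    then obtain v where v: "v \<in> C" "v \<noteq> m" "t i = v - m" unfolding D_def by blast
    have "m \<le> v" unfolding m_def by (rule Min_le[OF S(1) v(1)])
    then show ?thesis using v by simp
  qed
  have clos: "inT k t (t j - t i)" if "i \<in> {1..k}" "j \<in> {1..k}" "i < j" for i j
  proof -
    have lt: "t i < t j" using tless_iff[OF P that(1,2)] that(3) by simp
    have ne: "m + t i \<noteq> m + t j" using lt by simp
    have "toeplitz_adj k t (m + t i) (m + t j)"
      using C[unfolded is_clique_def, THEN conjunct2, rule_format, OF inC[OF that(1)] inC[OF that(2)] ne] .
    then show ?thesis using lt by (simp add: adj_iff)
  qed
  have a1: "t 1 \<ge> 1" using t1pos[OF P] .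
  have up: "1 \<le> j \<longrightarrow> j \<le> k \<longrightarrow> t j = j * t 1" for j
  proof (induction j)
    case 0 then show ?case by simp
  next
    case (Suc j)
    show ?case
    proof (intro impI)
      assume h: "1 \<le> Suc j" "Suc j \<le> k"
      show "t (Suc j) = Suc j * t 1"
      proof (cases "j = 0")
        case True then show ?thesis by simp
      next
        case False
        then have j1: "j \<in> {1..k}" "Suc j \<in> {1..k}" "(1::nat) \<in> {1..k}" using h by auto
        have l1: "inT k t (t (Suc j) - t 1)" using clos[of 1 "Suc j"] j1 False by simp
        then obtain l where l: "l \<in> {1..k}" "t l = t (Suc j) - t 1" unfolding inT_def by blast
        have "inT k t (t (Suc j) - t j)" using clos[of j "Suc j"] j1 by simp
        then have "t 1 \<le> t (Suc j) - t j" using inT_ge[OF P] by blast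
        have ljs: "t j < t (Suc j)" using tless_iff[OF P j1(1) j1(2)] by simp
        have "t j \<le> t l" using l(2) ljs \<open>t 1 \<le> t (Suc j) - t j\<close> by linarith
        then have "j \<le> l" using tle_iff[OF P j1(1) l(1)] by simp
        moreover have "t l < t (Suc j)" using l(2) a1 tless_iff[OF P j1(3) j1(2)] False by linarith
        then have "l < Suc j" using tless_iff[OF P l(1) j1(2)] by simp
        ultimately have "l = j" by simp
        then have "t j = t (Suc j) - t 1" using l(2) by simp
        then have "t (Suc j) = t j + t 1" using ljs \<open>t 1 \<le> t (Suc j) - t j\<close> by linarith
        then show ?thesis using Suc.IH False h by simp
      qed
    qed
  qed
  show ?thesis
  proof
    fix i assume "i \<in> {1..k}"
    then have "1 \<le> i" "i \<le> k" by auto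
    then show "t i = i * t 1" using up[of i] by blast
  qed
qed

lemma arith_clique:
  assumes P: "toeplitz_params n k t" and ar: "\<forall>i\<in>{1..k}. t i = i * t 1"
  shows "is_clique {1..n} (toeplitz_adj k t) ((\<lambda>i. 1 + i * t 1) ` {0..k}) \<and>
         card ((\<lambda>i. 1 + i * t 1) ` {0..k}) = k + 1"
proof -
  have a1: "t 1 \<ge> 1" using t1pos[OF P] .
  have tk: "t k \<le> n - 1" "n \<ge> 2" "k \<ge> 1" using P unfolding toeplitz_params_def by auto
  have "t k = k * t 1" using ar[rule_format, of k] tk by simp
  then have tk': "k * t 1 \<le> n - 1" using tk by linarith
  have inj: "inj_on (\<lambda>i. 1 + i * t 1) {0..k}" by (rule inj_onI) (use a1 in simp)
  have sub: "(\<lambda>i. 1 + i * t 1) ` {0..k} \<subseteq> {1..n}"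
  proof
    fix x assume "x \<in> (\<lambda>i. 1 + i * t 1) ` {0..k}"
    then obtain i where i: "i \<le> k" "x = 1 + i * t 1" by auto
    have "i * t 1 \<le> k * t 1" using i by simp
    then have "1 + i * t 1 \<le> n" using tk tk' by linarith
    then show "x \<in> {1..n}" using i by simp
  qed
  have adj: "toeplitz_adj k t (1 + i * t 1) (1 + j * t 1)" if "i \<le> k" "j \<le> k" "i < j" for i j
  proof -
    have "j - i \<in> {1..k}" using that by auto
    then have "t (j - i) = (j - i) * t 1" by (rule ar[rule_format])
    also have "\<dots> = j * t 1 - i * t 1" by (simp add: diff_mult_distrib)
    finally have e: "t (j - i) = (1 + j * t 1) - (1 + i * t 1)" by simp
    have "inT k t ((1 + j * t 1) - (1 + i * t 1))" unfolding inT_def using that e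
      by (intro bexI[of _ "j - i"]) auto
    moreover have "i * t 1 < j * t 1" using that a1 by simp
    ultimately show ?thesis by (simp add: adj_iff)
  qed
  have adjs: "toeplitz_adj k t u v \<longleftrightarrow> toeplitz_adj k t v u" for u v
    unfolding adj_iff by auto
  have cl: "is_clique {1..n} (toeplitz_adj k t) ((\<lambda>i. 1 + i * t 1) ` {0..k})"
    unfolding is_clique_def
  proof (intro conjI sub ballI impI)
    fix u v assume u: "u \<in> (\<lambda>i. 1 + i * t 1) ` {0..k}" and v: "v \<in> (\<lambda>i. 1 + i * t 1) ` {0..k}"
      and uv: "u \<noteq> v"
    obtain i where i: "i \<le> k" "u = 1 + i * t 1" using u by auto
    obtain j where j: "j \<le> k" "v = 1 + j * t 1" using v by auto
    have "i \<noteq> j" using uv i j by auto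
    then consider "i < j" | "j < i" by linarith
    then show "toeplitz_adj k t u v"
    proof cases
      case 1 then show ?thesis using adj[of i j] i j by simp
    next
      case 2
      then have "toeplitz_adj k t v u" using adj[of j i] i j by simp
      then show ?thesis using adjs[of u v] by blast
    qed
  qed
  show ?thesis using cl inj by (simp add: card_image)
qed

lemma clique_number_iff:
  assumes P: "toeplitz_params n k t"
  shows "(\<forall>i\<in>{1..k}. t i = i * t 1) \<longleftrightarrow> clique_number {1..n} (toeplitz_adj k t) = k + 1"
proof -
  define S where "S = {C. is_clique {1..n} (toeplitz_adj k t) C}"
  have finS: "finite S" unfolding S_def is_clique_def
    by (rule finite_subset[of _ "Pow {1..n}"]) auto
  have neS: "{} \<in> S" unfolding S_def is_clique_def by simp
  have bound: "\<forall>x\<in>card ` S. x \<le> k + 1" unfolding S_def using clique_le[OF P] by blast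
  have cn: "clique_number {1..n} (toeplitz_adj k t) = Max (card ` S)"
    unfolding clique_number_def S_def by simp
  have iff: "Max (card ` S) = k + 1 \<longleftrightarrow> k + 1 \<in> card ` S"
  proof
    assume "Max (card ` S) = k + 1"
    then show "k + 1 \<in> card ` S" using Max_in[of "card ` S"] finS neS by (metis empty_iff finite_imageI image_is_empty)
  next
    assume "k + 1 \<in> card ` S"
    then show "Max (card ` S) = k + 1" using bound finS by (intro Max_eqI) auto
  qed
  show ?thesis
  proof
    assume ar: "\<forall>i\<in>{1..k}. t i = i * t 1"
    have "k + 1 \<in> card ` S" using arith_clique[OF P ar] unfolding S_def by (metis (no_types, lifting) image_eqI mem_Collect_eq)
    then show "clique_number {1..n} (toeplitz_adj k t) = k + 1" using iff cn by simp
  next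
    assume "clique_number {1..n} (toeplitz_adj k t) = k + 1"
    then have "k + 1 \<in> card ` S" using iff cn by simp
    then obtain C where "is_clique {1..n} (toeplitz_adj k t) C" "card C = k + 1" unfolding S_def by auto
    then show "\<forall>i\<in>{1..k}. t i = i * t 1" using clique_full_arith[OF P] by blast
  qed
qed


lemma cc_inter: "{x..x + real k} \<inter> {y..y + real k} \<noteq> {} \<longleftrightarrow> \<bar>x - y\<bar> \<le> real k"
proof
  assume "{x..x + real k} \<inter> {y..y + real k} \<noteq> {}"
  then obtain z where "z \<in> {x..x + real k} \<inter> {y..y + real k}" by blast
  then have "x \<le> z" "z \<le> x + real k" "y \<le> z" "z \<le> y + real k" by auto
  then show "\<bar>x - y\<bar> \<le> real k" by linarith
next
  assume h: "\<bar>x - y\<bar> \<le> real k"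
  have "max x y \<in> {x..x + real k} \<inter> {y..y + real k}" using h by (auto simp: max_def)
  then show "{x..x + real k} \<inter> {y..y + real k} \<noteq> {}" by blast
qed

lemma adj_res_lt:
  fixes a u v k :: nat
  assumes a0: "a > 0" and vu: "v < u"
  shows "(\<exists>l\<in>{1..k}. l * a = u - v) \<longleftrightarrow> (u mod a = v mod a \<and> u div a - v div a \<le> k)"
proof
  assume "\<exists>l\<in>{1..k}. l * a = u - v"
  then obtain l where l: "l \<in> {1..k}" "l * a = u - v" by blast
  then have u: "u = v + l * a" using vu by simp
  have "u mod a = v mod a" unfolding u by simp
  moreover have "u div a = v div a + l" unfolding u using a0 by simp
  ultimately show "u mod a = v mod a \<and> u div a - v div a \<le> k" using l by simp
next
  assume h: "u mod a = v mod a \<and> u div a - v div a \<le> k"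
  have eu: "u = u div a * a + u mod a" by simp
  have ev: "v = v div a * a + v mod a" by simp
  have "v div a < u div a"
  proof (rule ccontr)
    assume "\<not> v div a < u div a"
    then have "u div a * a \<le> v div a * a" by simp
    then have "u \<le> v" using eu ev h by linarith
    then show False using vu by simp
  qed
  moreover have "(u div a - v div a) * a = u - v"
  proof -
    have "(u div a - v div a) * a = u div a * a - v div a * a" by (simp add: diff_mult_distrib)
    also have "\<dots> = u - v" using eu ev h by linarith
    finally show ?thesis .
  qed
  ultimately show "\<exists>l\<in>{1..k}. l * a = u - v" using h by (intro bexI[of _ "u div a - v div a"]) auto
qed

lemma big_abs:
  fixes D Q Cc :: int and k n :: nat
  assumes "D \<noteq> 0" "\<bar>Q\<bar> \<le> int n" "Cc = int n + int k + 1"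
  shows "\<bar>D * Cc + Q\<bar> > int k"
proof -
  have "\<bar>D\<bar> \<ge> 1" using assms(1) by linarith
  then have "\<bar>D\<bar> * Cc \<ge> 1 * Cc" using assms(3) by (intro mult_right_mono) auto
  then have "\<bar>D * Cc\<bar> \<ge> Cc" using assms(3) by (simp add: abs_mult)
  then show ?thesis using assms(2,3) by linarith
qed

lemma arith_interval:
  assumes P: "toeplitz_params n k t" and ar: "\<forall>i\<in>{1..k}. t i = i * t 1"
  shows "interval_graph {1..n} (toeplitz_adj k t)"
proof -
  define a where "a = t 1"
  have a0: "a > 0" using t1pos[OF P] a_def by simp
  define Cc :: int where "Cc = int n + int k + 1"
  define F :: "nat \<Rightarrow> int" where "F v = int (v mod a) * Cc + int (v div a)" for v
  define I :: "nat \<Rightarrow> real set" where "I v = {real_of_int (F v) .. real_of_int (F v) + real k}" for v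
  have inT_ar: "inT k t x \<longleftrightarrow> (\<exists>l\<in>{1..k}. l * a = x)" for x
  proof -
    have "\<forall>l\<in>{1..k}. t l = l * a" using ar unfolding a_def .
    then show ?thesis unfolding inT_def by auto
  qed
  have adjc: "toeplitz_adj k t u v \<longleftrightarrow> (u mod a = v mod a \<and> \<bar>int (u div a) - int (v div a)\<bar> \<le> int k)"
    if "u \<noteq> v" for u v
  proof (cases "v < u")
    case True
    have "toeplitz_adj k t u v \<longleftrightarrow> (\<exists>l\<in>{1..k}. l * a = u - v)" using that True by (simp add: adj_iff inT_ar)
    also have "\<dots> \<longleftrightarrow> (u mod a = v mod a \<and> u div a - v div a \<le> k)" by (rule adj_res_lt[OF a0 True])
    also have "\<dots> \<longleftrightarrow> (u mod a = v mod a \<and> \<bar>int (u div a) - int (v div a)\<bar> \<le> int k)"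
      using div_le_mono[of v u a] True by auto
    finally show ?thesis .
  next
    case False
    then have vu: "u < v" using that by simp
    have "toeplitz_adj k t u v \<longleftrightarrow> (\<exists>l\<in>{1..k}. l * a = v - u)" using that vu by (simp add: adj_iff inT_ar)
    also have "\<dots> \<longleftrightarrow> (v mod a = u mod a \<and> v div a - u div a \<le> k)" by (rule adj_res_lt[OF a0 vu])
    also have "\<dots> \<longleftrightarrow> (u mod a = v mod a \<and> \<bar>int (u div a) - int (v div a)\<bar> \<le> int k)"
      using div_le_mono[of u v a] vu by auto
    finally show ?thesis .
  qed
  have Fc: "\<bar>F u - F v\<bar> \<le> int k \<longleftrightarrow> (u mod a = v mod a \<and> \<bar>int (u div a) - int (v div a)\<bar> \<le> int k)"
    if "u \<in> {1..n}" "v \<in> {1..n}" for u v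
  proof (cases "u mod a = v mod a")
    case True
    then have "F u - F v = int (u div a) - int (v div a)" unfolding F_def by simp
    then show ?thesis using True by simp
  next
    case False
    define D where "D = int (u mod a) - int (v mod a)"
    define Q where "Q = int (u div a) - int (v div a)"
    have D0: "D \<noteq> 0" unfolding D_def using False by simp
    have d1: "u div a \<le> u" "v div a \<le> v" by (rule div_le_dividend)+
    have "u \<le> n" "v \<le> n" using that by auto
    then have "u div a \<le> n" "v div a \<le> n" using d1 by linarith+
    then have Qb: "\<bar>Q\<bar> \<le> int n" unfolding Q_def by linarith
    have "F u - F v = D * Cc + Q" unfolding F_def D_def Q_def by (simp add: algebra_simps)
    then have "\<bar>F u - F v\<bar> > int k" using big_abs[OF D0 Qb Cc_def] by simp
    then show ?thesis using False by simp
  qed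
  show ?thesis unfolding interval_graph_def
  proof (intro exI[of _ I] conjI ballI impI)
    fix v assume "v \<in> {1..n}"
    show "is_interval (I v)" unfolding I_def by (rule is_interval_cc)
    show "I v \<noteq> {}" unfolding I_def by simp
  next
    fix u v assume u: "u \<in> {1..n}" and v: "v \<in> {1..n}" and uv: "u \<noteq> v"
    have "I u \<inter> I v \<noteq> {} \<longleftrightarrow> \<bar>real_of_int (F u) - real_of_int (F v)\<bar> \<le> real k"
      unfolding I_def by (rule cc_inter)
    also have "\<dots> \<longleftrightarrow> \<bar>F u - F v\<bar> \<le> int k"
    proof -
      have "\<bar>real_of_int (F u) - real_of_int (F v)\<bar> = real_of_int \<bar>F u - F v\<bar>" by simp
      then show ?thesis by linarith
    qed
    also have "\<dots> \<longleftrightarrow> toeplitz_adj k t u v" using Fc[OF u v] adjc[OF uv] by simp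
    finally show "toeplitz_adj k t u v \<longleftrightarrow> I u \<inter> I v \<noteq> {}" by simp
  qed
qed


lemma dvd_small_int:
  fixes L d :: int
  assumes "L > 0" "-2*L < d" "d < L" "L dvd d"
  shows "d = 0 \<or> d = -L"
proof -
  obtain z where z: "d = L * z" using assms(4) by (auto elim: dvdE)
  have "z < 1"
  proof (rule ccontr)
    assume "\<not> z < 1" then have "L * 1 \<le> L * z" using mult_left_mono[of 1 z L] assms(1) by simp
    then show False using z assms by linarith
  qed
  moreover have "z > -2"
  proof (rule ccontr)
    assume "\<not> z > -2" then have "L * z \<le> L * (-2)" using mult_left_mono[of z "-2" L] assms(1) by simp
    then show False using z assms by linarith
  qed
  ultimately have "z = 0 \<or> z = -1" by auto
  then show ?thesis using z by auto
qed

lemma K1: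
  fixes m a d :: int
  assumes "0 < a" "a < m" "\<bar>d\<bar> < m"
  shows "(d = a \<or> d = -a \<or> d = m - a \<or> d = a - m) \<longleftrightarrow> (m dvd (d - a) \<or> m dvd (d + a))"
proof
  assume "d = a \<or> d = -a \<or> d = m - a \<or> d = a - m"
  then show "m dvd (d - a) \<or> m dvd (d + a)" by auto
next
  assume h: "m dvd (d - a) \<or> m dvd (d + a)"
  show "d = a \<or> d = -a \<or> d = m - a \<or> d = a - m"
  proof (cases "m dvd (d - a)")
    case True
    then have "d - a = 0 \<or> d - a = -m" using dvd_small_int[of m "d - a"] assms by auto
    then show ?thesis by auto
  next
    case False
    then have "m dvd (d + a)" using h by simp
    then have "m dvd (-(d + a))" using dvd_minus_iff[of m "d+a"] by blast
    then have "-(d + a) = 0 \<or> -(d + a) = -m" using dvd_small_int[of m "-(d + a)"] assms by auto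
    then show ?thesis by auto
  qed
qed

lemma coprime_cancel:
  fixes L g a' d :: int
  assumes "g > 0" "coprime L a'"
  shows "(L * g) dvd (d * (a' * g)) \<longleftrightarrow> L dvd d"
proof -
  have "(L * g) dvd (d * (a' * g)) \<longleftrightarrow> (L * g) dvd ((d * a') * g)" by (simp add: ac_simps)
  also have "\<dots> \<longleftrightarrow> L dvd (d * a')" using assms(1) by (simp add: mult_dvd_mono dvd_mult_cancel2)
  also have "\<dots> \<longleftrightarrow> L dvd d" using assms(2) by (simp add: coprime_dvd_mult_left_iff)
  finally show ?thesis .
qed

lemma mod_dvd_cong:
  fixes m A B c :: int
  shows "m dvd (A mod m - B mod m - c) \<longleftrightarrow> m dvd (A - B - c)"
  by (smt (verit, best) mod_diff_left_eq mod_diff_right_eq mod_eq_0_iff_dvd)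

lemma succ_mod_iff:
  fixes L i j :: nat
  assumes "i < L" "j < L"
  shows "(int L dvd (int j - int i - 1)) \<longleftrightarrow> j = (i + 1) mod L"
proof
  assume h: "int L dvd (int j - int i - 1)"
  have "int j - int i - 1 = 0 \<or> int j - int i - 1 = - int L"
    using dvd_small_int[of "int L" "int j - int i - 1"] h assms by auto
  then show "j = (i + 1) mod L"
  proof
    assume "int j - int i - 1 = 0"
    then have "j = i + 1" by simp
    then show ?thesis using assms by simp
  next
    assume "int j - int i - 1 = - int L"
    then have "j = 0" "i + 1 = L" using assms by auto
    then show ?thesis by simp
  qed
next
  assume h: "j = (i + 1) mod L"
  show "int L dvd (int j - int i - 1)"
  proof (cases "i + 1 = L")
    case True
    then have "j = 0" using h by simp
    then have "int j - int i - 1 = - int L" using True by simp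
    then show ?thesis by simp
  next
    case False
    then have "j = i + 1" using h assms by simp
    then show ?thesis by simp
  qed
qed

lemma cyc_hole:
  fixes a b :: nat and V :: "nat set"
  assumes a0: "0 < a" and ab: "a < b" and b2: "b \<noteq> 2 * a" and VV: "{1..a+b} \<subseteq> V"
    and EE: "\<And>u v. u \<in> {1..a+b} \<Longrightarrow> v \<in> {1..a+b} \<Longrightarrow>
       E u v \<longleftrightarrow> u \<noteq> v \<and> (nat \<bar>int u - int v\<bar> = a \<or> nat \<bar>int u - int v\<bar> = b)"
  shows "has_hole V E"
proof -
  define mi where "mi = int a + int b"
  define g where "g = gcd (int a) (int b)"
  define a' where "a' = int a div g"
  define b' where "b' = int b div g"
  have g0: "g > 0" unfolding g_def using a0 by simp
  have ag: "int a = a' * g" unfolding a'_def g_def by simp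
  have bg: "int b = b' * g" unfolding b'_def g_def by simp
  have cop: "coprime a' b'" unfolding a'_def b'_def g_def using div_gcd_coprime[of "int a" "int b"] a0 by simp
  define Li where "Li = a' + b'"
  have mg: "mi = Li * g" unfolding mi_def Li_def using ag bg by (simp add: algebra_simps)
  have copL: "coprime Li a'" using cop unfolding Li_def coprime_iff_gcd_eq_1
    by (metis gcd.commute gcd_add2)
  have a'0: "a' > 0" using ag g0 a0 by (metis of_nat_0_less_iff zero_less_mult_pos2)
  have "a' * g < b' * g" using ag bg ab by (metis of_nat_less_iff)
  then have a'b': "a' < b'" using g0 by (meson mult_right_less_imp_less order_less_le)
  have L4: "Li \<ge> 4"
  proof (rule ccontr)
    assume "\<not> Li \<ge> 4"
    then have "a' = 1" "b' = 2" using a'0 a'b' unfolding Li_def by auto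
    then have "int b = 2 * int a" using ag bg by simp
    then show False using b2 by simp
  qed
  define L where "L = nat Li"
  have LL: "int L = Li" unfolding L_def using L4 by simp
  have L4n: "L \<ge> 4" using L4 LL by simp
  define x where "x i = (int i * int a) mod mi" for i :: nat
  have mi0: "mi > 0" unfolding mi_def using a0 by simp
  have x0: "0 \<le> x i" "x i < mi" for i unfolding x_def using mi0 by auto
  define cs where "cs = map (\<lambda>i. nat (x i) + 1) [0..<L]"
  have len: "length cs = L" unfolding cs_def by simp
  have csi: "cs ! i = nat (x i) + 1" if "i < L" for i unfolding cs_def using that by simp
  have csV: "cs ! i \<in> {1..a+b}" if "i < L" for i
    using csi[OF that] x0[of i] unfolding mi_def by auto
  have dif: "int (cs ! j) - int (cs ! i) = x j - x i" if "i < L" "j < L" for i j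
    using csi that x0 by simp
  have key: "mi dvd (x j - x i - c) \<longleftrightarrow> Li dvd ((int j - int i) * a' - c')"
    if "c = c' * g" for i j c c'
  proof -
    have "mi dvd (x j - x i - c) \<longleftrightarrow> mi dvd (int j * int a - int i * int a - c)"
      unfolding x_def by (rule mod_dvd_cong)
    also have "int j * int a - int i * int a - c = ((int j - int i) * a' - c') * g"
      using ag that by (simp add: algebra_simps)
    also have "mi dvd (((int j - int i) * a' - c') * g) \<longleftrightarrow> Li dvd ((int j - int i) * a' - c')"
      unfolding mg using g0 by simp
    finally show ?thesis .
  qed
  have lin: "Li dvd (d * a') \<longleftrightarrow> Li dvd d" for d
    using copL by (simp add: coprime_dvd_mult_left_iff)
  have distinct: "distinct cs"
  proof -
    have "i = j" if "i < L" "j < L" "cs ! i = cs ! j" for i j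
    proof -
      have "x j - x i = 0" using dif[OF that(1,2)] that(3) by simp
      then have "mi dvd (x j - x i - 0)" by simp
      then have "Li dvd ((int j - int i) * a' - 0)" using key[of 0 0] by simp
      then have "Li dvd (int j - int i)" using lin by simp
      then have "int j - int i = 0 \<or> int j - int i = - Li"
        using dvd_small_int[of Li "int j - int i"] that LL by auto
      then show ?thesis using that LL by auto
    qed
    then show ?thesis unfolding distinct_conv_nth len by blast
  qed
  have adj: "E (cs ! i) (cs ! j) \<longleftrightarrow> (j = (i + 1) mod L \<or> i = (j + 1) mod L)"
    if "i < L" "j < L" "i \<noteq> j" for i j
  proof -
    have ne: "cs ! i \<noteq> cs ! j" using distinct that len by (simp add: nth_eq_iff_index_eq)
    define d where "d = x j - x i"
    have dd: "\<bar>d\<bar> < mi" unfolding d_def using x0[of i] x0[of j] by auto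
    have ad: "nat \<bar>int (cs ! i) - int (cs ! j)\<bar> = nat \<bar>d\<bar>"
      unfolding d_def using dif[OF that(1,2)] by simp
    have "E (cs ! i) (cs ! j) \<longleftrightarrow> (nat \<bar>d\<bar> = a \<or> nat \<bar>d\<bar> = b)"
      using EE[OF csV[OF that(1)] csV[OF that(2)]] ne ad by simp
    also have "\<dots> \<longleftrightarrow> (\<bar>d\<bar> = int a \<or> \<bar>d\<bar> = int b)"
      by (simp add: nat_eq_iff)
    also have "\<dots> \<longleftrightarrow> (d = int a \<or> d = - int a \<or> d = mi - int a \<or> d = int a - mi)"
      unfolding mi_def by arith
    also have "\<dots> \<longleftrightarrow> (mi dvd (d - int a) \<or> mi dvd (d + int a))"
      by (rule K1) (use a0 ab dd in \<open>auto simp: mi_def\<close>)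
    also have "mi dvd (d - int a) \<longleftrightarrow> Li dvd ((int j - int i) * a' - a')"
      unfolding d_def by (rule key) (rule ag)
    also have "\<dots> \<longleftrightarrow> Li dvd ((int j - int i - 1) * a')" by (simp add: algebra_simps)
    also have "\<dots> \<longleftrightarrow> j = (i + 1) mod L" using lin succ_mod_iff[OF that(1,2)] LL by simp
    also have "mi dvd (d + int a) \<longleftrightarrow> mi dvd (x i - x j - int a)"
    proof -
      have "d + int a = - (x i - x j - int a)" unfolding d_def by simp
      then show ?thesis by (metis dvd_minus_iff)
    qed
    also have "\<dots> \<longleftrightarrow> Li dvd ((int i - int j) * a' - a')" by (rule key) (rule ag)
    also have "\<dots> \<longleftrightarrow> Li dvd ((int i - int j - 1) * a')" by (simp add: algebra_simps)
    also have "\<dots> \<longleftrightarrow> i = (j + 1) mod L" using lin succ_mod_iff[OF that(2,1)] LL by simp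
    finally show ?thesis .
  qed
  show ?thesis unfolding has_hole_def
  proof (intro exI conjI)
    show "4 \<le> length cs" using len L4n by simp
    show "distinct cs" by (rule distinct)
    show "set cs \<subseteq> V"
    proof
      fix v assume "v \<in> set cs"
      then obtain i where "i < L" "v = cs ! i" using len by (auto simp: in_set_conv_nth)
      then show "v \<in> V" using csV[of i] VV by blast
    qed
    show "\<forall>i<length cs. \<forall>j<length cs. i \<noteq> j \<longrightarrow>
        (E (cs ! i) (cs ! j) \<longleftrightarrow> (j = (i + 1) mod length cs \<or> i = (j + 1) mod length cs))"
      using adj len by simp
  qed
qed


lemma interval_no_hole:
  assumes "interval_graph V E"
  shows "\<not> has_hole V E"
proof
  assume h: "has_hole V E"
  obtain cs where H: "length cs \<ge> 4 \<and> distinct cs \<and> set cs \<subseteq> V \<and>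
     (\<forall>i<length cs. \<forall>j<length cs. i \<noteq> j \<longrightarrow>
        (E (cs ! i) (cs ! j) \<longleftrightarrow> (j = (i + 1) mod length cs \<or> i = (j + 1) mod length cs)))"
    using h unfolding has_hole_def by (rule exE)
  note L4 = H[THEN conjunct1] and dist = H[THEN conjunct2, THEN conjunct1]
    and sub = H[THEN conjunct2, THEN conjunct2, THEN conjunct1]
    and adj = H[THEN conjunct2, THEN conjunct2, THEN conjunct2]
  obtain I :: "_ \<Rightarrow> real set" where
    HI: "(\<forall>v\<in>V. is_interval (I v) \<and> I v \<noteq> {}) \<and>
    (\<forall>u\<in>V. \<forall>v\<in>V. u \<noteq> v \<longrightarrow> (E u v \<longleftrightarrow> I u \<inter> I v \<noteq> {}))"
    using assms unfolding interval_graph_def by (rule exE)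
  note Iint = HI[THEN conjunct1] and Iadj = HI[THEN conjunct2]
  define L where "L = length cs"
  define J where "J i = I (cs ! i)" for i
  have key: "J i \<inter> J j \<noteq> {} \<longleftrightarrow> (j = (i+1) mod L \<or> i = (j+1) mod L)"
    if "i < L" "j < L" "i \<noteq> j" for i j
  proof -
    have "cs ! i \<in> V" "cs ! j \<in> V" using that sub unfolding L_def by auto
    moreover have "cs ! i \<noteq> cs ! j" using that dist unfolding L_def by (simp add: nth_eq_iff_index_eq)
    ultimately have "E (cs ! i) (cs ! j) \<longleftrightarrow> I (cs ! i) \<inter> I (cs ! j) \<noteq> {}"
      using Iadj by blast
    moreover have "E (cs ! i) (cs ! j) \<longleftrightarrow> (j = (i + 1) mod L \<or> i = (j + 1) mod L)"
      using adj that unfolding L_def by blast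
    ultimately show ?thesis unfolding J_def by simp
  qed
  have conv: "z \<in> J i" if "i < L" "a \<in> J i" "b \<in> J i" "a \<le> z" "z \<le> b" for i a b z
  proof -
    have "cs ! i \<in> V" using that sub unfolding L_def by auto
    then have "is_interval (J i)" using Iint unfolding J_def by auto
    then show ?thesis using that unfolding is_interval_1 by blast
  qed
  have L4': "L \<ge> 4" using L4 L_def by simp
  have e01: "J 0 \<inter> J 1 \<noteq> {}" using key[of 0 1] L4' by simp
  have e12: "J 1 \<inter> J 2 \<noteq> {}" using key[of 1 2] L4' by simp
  have n02: "J 0 \<inter> J 2 = {}" using key[of 0 2] L4' by simp
  have n1m: "J 1 \<inter> J m = {}" if "3 \<le> m" "m < L" for m
  proof -
    have "(m+1) mod L \<noteq> 1"
    proof (cases "m + 1 = L")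
      case True then show ?thesis using L4' by simp
    next
      case False then show ?thesis using that by simp
    qed
    then show ?thesis using key[of 1 m] that L4' by auto
  qed
  have em: "J m \<inter> J ((m+1) mod L) \<noteq> {}" if "m < L" for m
  proof -
    have "(m+1) mod L \<noteq> m"
    proof (cases "m + 1 = L")
      case True then show ?thesis using L4' by simp
    next
      case False then show ?thesis using that by simp
    qed
    then show ?thesis using key[of m "(m+1) mod L"] that L4' by auto
  qed
  obtain x where x: "x \<in> J 0" "x \<in> J 1" using e01 by blast
  obtain y where y: "y \<in> J 1" "y \<in> J 2" using e12 by blast
  define q where "q m = (SOME z. z \<in> J m \<and> z \<in> J ((m+1) mod L))" for m
  have q: "q m \<in> J m" "q m \<in> J ((m+1) mod L)" if "m < L" for m
    using someI_ex[of "\<lambda>z. z \<in> J m \<and> z \<in> J ((m+1) mod L)"] em[OF that] unfolding q_def by blast+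
  have xy: "x \<noteq> y" using x y n02 by blast
  have seg: "z \<in> J 1" if "min x y \<le> z" "z \<le> max x y" for z
  proof (cases "x \<le> y")
    case True then show ?thesis using conv[of 1 x y z] x y that L4' by auto
  next
    case False then show ?thesis using conv[of 1 y x z] x y that L4' by auto
  qed
  have notin: "q m < min x y \<or> q m > max x y" if "2 \<le> m" "m < L" for m
  proof -
    have "q m \<notin> J 1"
    proof (cases "m = 2")
      case True
      then have "q m \<in> J 3" using q(2)[of m] that L4' by simp
      then show ?thesis using n1m[of 3] L4' by auto
    next
      case False
      then show ?thesis using q(1)[of m] n1m[of m] that by auto
    qed
    then show ?thesis using seg[of "q m"] by linarith
  qed
  have side: "q m < min x y \<longleftrightarrow> q 2 < min x y" if "2 \<le> m" "m < L" for m
    using that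
  proof (induction m rule: dec_induct)
    case base then show ?case by simp
  next
    case (step m)
    have a: "q m \<in> J (m+1)" using q(2)[of m] step by simp
    have b: "q (m+1) \<in> J (m+1)" using q(1)[of "m+1"] step by simp
    have dj: "J 1 \<inter> J (m+1) = {}" using n1m[of "m+1"] step by simp
    have mJ: "min x y \<in> J 1" using seg by auto
    have c1: "\<not> (q m < min x y \<and> q (m+1) > max x y)"
    proof
      assume h: "q m < min x y \<and> q (m+1) > max x y"
      then have "min x y \<in> J (m+1)" using conv[of "m+1" "q m" "q (m+1)" "min x y"] a b step by auto
      then show False using dj mJ by blast
    qed
    have c2: "\<not> (q (m+1) < min x y \<and> q m > max x y)"
    proof
      assume h: "q (m+1) < min x y \<and> q m > max x y"
      then have "min x y \<in> J (m+1)" using conv[of "m+1" "q (m+1)" "q m" "min x y"] a b step by auto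
      then show False using dj mJ by blast
    qed
    have "q m < min x y \<or> q m > max x y" "q (m+1) < min x y \<or> q (m+1) > max x y"
      using notin[of m] notin[of "m+1"] step by auto
    moreover have ih: "q m < min x y \<longleftrightarrow> q 2 < min x y" using step by simp
    ultimately have "q (m+1) < min x y \<longleftrightarrow> q 2 < min x y" using c1 c2 by (smt (verit))
    then show ?case by simp
  qed
  have q2: "q 2 \<in> J 2" using q(1)[of 2] L4' by simp
  have qL: "q (L-1) \<in> J 0" using q(2)[of "L-1"] L4' by simp
  have qL1: "q (L-1) \<in> J (L-1)" using q(1)[of "L-1"] L4' by simp
  have x2: "x \<notin> J 2" using x n02 by blast
  have y0: "y \<notin> J 0" using y n02 by blast
  have s: "q (L-1) < min x y \<longleftrightarrow> q 2 < min x y" using side[of "L-1"] L4' by simp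
  have n2: "q 2 < min x y \<or> q 2 > max x y" using notin[of 2] L4' by simp
  have nL: "q (L-1) < min x y \<or> q (L-1) > max x y" using notin[of "L-1"] L4' by simp
  show False
  proof (cases "x < y")
    case True
    have "\<not> q 2 < min x y"
    proof
      assume "q 2 < min x y"
      then have "x \<in> J 2" using conv[of 2 "q 2" y x] q2 y True L4' by auto
      then show False using x2 by simp
    qed
    moreover have "\<not> q (L-1) > max x y"
    proof
      assume "q (L-1) > max x y"
      then have "y \<in> J 0" using conv[of 0 x "q (L-1)" y] qL x True L4' by auto
      then show False using y0 by simp
    qed
    ultimately show False using s nL by auto
  next
    case False
    then have yx: "y < x" using xy by simp
    have "\<not> q 2 > max x y"
    proof
      assume "q 2 > max x y"
      then have "x \<in> J 2" using conv[of 2 y "q 2" x] q2 y yx L4' by auto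
      then show False using x2 by simp
    qed
    moreover have "\<not> q (L-1) < min x y"
    proof
      assume "q (L-1) < min x y"
      then have "y \<in> J 0" using conv[of 0 "q (L-1)" x y] qL x yx L4' by auto
      then show False using y0 by simp
    qed
    ultimately show False using s n2 nL by auto
  qed
qed


lemma nonarith_hole:
  assumes P: "toeplitz_params n k t" and k2: "k \<ge> 2" and nn: "n \<ge> t (k - 1) + t k"
    and na: "\<not> (\<forall>i\<in>{1..k}. t i = i * t 1)"
  shows "has_hole {1..n} (toeplitz_adj k t)"
proof -
  define a where "a = t 1"
  define b where "b = t 2"
  have a0: "a > 0" using t1pos[OF P] a_def by simp
  have ab: "a < b" using tmono[OF P, of 1 2] k2 a_def b_def by simp
  have cyc: "has_hole {1..n} (toeplitz_adj k t)"
    if b2: "b \<noteq> 2 * a" and iT: "\<And>x. x < a + b \<Longrightarrow> inT k t x \<longleftrightarrow> (x = a \<or> x = b)" and abn: "a + b \<le> n"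
  proof (rule cyc_hole[OF a0 ab b2])
    show "{1..a + b} \<subseteq> {1..n}" using abn by auto
    fix u v assume u: "u \<in> {1..a+b}" and v: "v \<in> {1..a+b}"
    have lt: "nat \<bar>int u - int v\<bar> < a + b" using u v by auto
    have "toeplitz_adj k t u v \<longleftrightarrow> u \<noteq> v \<and> inT k t (nat \<bar>int u - int v\<bar>)"
      unfolding toeplitz_adj_def inT_def by metis
    also have "\<dots> \<longleftrightarrow> u \<noteq> v \<and> (nat \<bar>int u - int v\<bar> = a \<or> nat \<bar>int u - int v\<bar> = b)"
      using iT[OF lt] by simp
    finally show "toeplitz_adj k t u v \<longleftrightarrow>
       u \<noteq> v \<and> (nat \<bar>int u - int v\<bar> = a \<or> nat \<bar>int u - int v\<bar> = b)" .
  qed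
  show ?thesis
  proof (cases "k = 2")
    case True
    have b2: "b \<noteq> 2 * a"
    proof
      assume h: "b = 2 * a"
      have "\<forall>i\<in>{1..k}. t i = i * t 1"
      proof
        fix i assume "i \<in> {1..k}"
        then have "i = 1 \<or> i = 2" using True by auto
        then show "t i = i * t 1" using h a_def b_def by auto
      qed
      then show False using na by blast
    qed
    have iT: "inT k t x \<longleftrightarrow> (x = a \<or> x = b)" for x
    proof -
      have "{1..k} = {1, 2}" using True by auto
      then show ?thesis unfolding inT_def a_def b_def by auto
    qed
    show ?thesis by (rule cyc[OF b2 iT]) (use nn True a_def b_def in simp)
  next
    case False
    then have k3: "k \<ge> 3" using k2 by simp
    show ?thesis
    proof (cases "\<forall>p q. inT k t p \<longrightarrow> inT k t q \<longrightarrow> p < q \<longrightarrow> p + q < t (k-1) + t k \<longrightarrow>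
               inT k t (q - p) \<or> inT k t (p + q)")
      case True
      have L: "t k = t (k-1) + t 1 \<and> (k \<ge> 4 \<longrightarrow> (\<forall>i\<in>{1..k}. t i = i * t 1))"
        by (rule l_arith[OF P k3]) (use True in blast)
      have k3': "k = 3" using L na k3 by auto
      have t3: "t 3 = a + b" using L k3' a_def b_def by simp
      have b2: "b \<noteq> 2 * a"
      proof
        assume h: "b = 2 * a"
        have "\<forall>i\<in>{1..k}. t i = i * t 1"
        proof
          fix i assume "i \<in> {1..k}"
          then have "i = 1 \<or> i = 2 \<or> i = 3" using k3' by auto
          then show "t i = i * t 1" using h t3 a_def b_def by auto
        qed
        then show False using na by blast
      qed
      have iT: "inT k t x \<longleftrightarrow> (x = a \<or> x = b)" if "x < a + b" for x
      proof -
        have "{1..k} = {1, 2, 3}" using k3' by auto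
        then show ?thesis unfolding inT_def a_def b_def using that t3 a_def b_def by auto
      qed
      have abn: "a + b \<le> n" using nn k3' t3 ab by simp
      show ?thesis by (rule cyc[OF b2 iT abn])
    next
      case False
      then obtain p q where pq: "inT k t p" "inT k t q" "p < q" "p + q < t (k-1) + t k"
        "\<not> inT k t (q - p)" "\<not> inT k t (p + q)" by blast
      show ?thesis by (rule c4_hole[OF P pq(1,2,3,6,5)]) (use pq(4) nn in linarith)
    qed
  qed
qed

theorem theorem3p3:
  fixes n k :: nat and t :: "nat \<Rightarrow> nat"
  assumes "toeplitz_params n k t"
    and "k \<ge> 2"
    and "n \<ge> t (k - 1) + t k"
  shows "(interval_graph {1..n} (toeplitz_adj k t) \<longleftrightarrow> chordal {1..n} (toeplitz_adj k t))
       \<and> (chordal {1..n} (toeplitz_adj k t) \<longleftrightarrow> (\<forall>i\<in>{1..k}. t i = i * t 1))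
       \<and> ((\<forall>i\<in>{1..k}. t i = i * t 1) \<longleftrightarrow> clique_number {1..n} (toeplitz_adj k t) = k + 1)"
proof -
  have H1: "interval_graph {1..n} (toeplitz_adj k t) \<Longrightarrow> chordal {1..n} (toeplitz_adj k t)"
    unfolding chordal_def by (rule interval_no_hole)
  have H2: "(\<forall>i\<in>{1..k}. t i = i * t 1) \<Longrightarrow> interval_graph {1..n} (toeplitz_adj k t)"
    by (rule arith_interval[OF assms(1)])
  have H3: "chordal {1..n} (toeplitz_adj k t) \<Longrightarrow> (\<forall>i\<in>{1..k}. t i = i * t 1)"
    unfolding chordal_def using nonarith_hole[OF assms] by blast
  have H4: "(\<forall>i\<in>{1..k}. t i = i * t 1) \<longleftrightarrow> clique_number {1..n} (toeplitz_adj k t) = k + 1"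
    by (rule clique_number_iff[OF assms(1)])
  show ?thesis using H1 H2 H3 H4 by blast
qed


end
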